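(* Let $\boldsymbol g_1,\dots,\boldsymbol g_m\in\mathbb{Z}[X^{\pm}]^K$, let $\mathcal{M}_{\mathbb{Z}}=\sum_j\mathbb{Z}[X^{\pm}]\boldsymbol g_j$ and $\mathcal{M}=\sum_j\mathbb{R}[X^{\pm}]\boldsymbol g_j$, and let $a_1,\dots,a_K\in\mathbb{Z}^n$ and $I,J\subseteq\{1,\dots,K\}$. Then there exists $\widetilde{\boldsymbol f}\in\mathcal{M}_{\mathbb{Z}}\cap(\mathbb{N}[X^{\pm}]\setminus\{0\})^K$ satisfying $$(O_v\cup J)\cap M_v(I,\boldsymbol f)\neq\emptyset\quad\text{for every }v\in\mathbb{R}^n\setminus\{0\}\qquad(\ast)$$ if and only if there exists $\boldsymbol f\in\mathcal{M}\cap(\mathbb{R}_{\ge0}[X^{\pm}]\setminus\{0\})^K$ satisfying $(\ast)$.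
   Context: $R[X^{\pm}]=R[X_1^{\pm1},\dots,X_n^{\pm1}]$, $X^b=X_1^{b_1}\cdots X_n^{b_n}$. For $f=\sum c_bX^b\neq0$ and $v\in\mathbb{R}^n\setminus\{0\}$, $\deg_v(f)=\max\{v\cdot b:c_b\ne0\}$, $\deg_v(0)=-\infty$. $M_v(I,\boldsymbol f)=\{i\in I:\deg_v(f_i)=\max_{i'\in I}\deg_v(f_{i'})\}$; $O_v=\{i\in\{1,\dots,K\}:a_i\not\perp v\}$. *)

theory Defs
  imports "HOL-Analysis.Analysis" "HOL-Library.Poly_Mapping" "HOL-Library.Extended_Real"
begin

text \<open>Laurent polynomials R[X_1^{+-1},...,X_n^{+-1}] are represented as finitely supported
  functions from exponent vectors in int^n to R; multiplication of poly_mapping is the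
  convolution, i.e. the product of Laurent polynomials (X^b * X^c = X^(b+c)).\<close>

type_synonym ('n, 'r) lpoly = "(int ^ 'n) \<Rightarrow>\<^sub>0 'r"

definition vdot :: "real ^ 'n \<Rightarrow> int ^ 'n \<Rightarrow> real" where
  "vdot v b = (\<Sum>i\<in>UNIV. v $ i * real_of_int (b $ i))"

definition deg_v :: "real ^ 'n \<Rightarrow> ('n, 'r::zero) lpoly \<Rightarrow> ereal" where
  "deg_v v f = (if f = 0 then -\<infinity> else ereal (Max ((\<lambda>b. vdot v b) ` Poly_Mapping.keys f)))"

definition Mv :: "real ^ 'n \<Rightarrow> nat set \<Rightarrow> (nat \<Rightarrow> ('n, 'r::zero) lpoly) \<Rightarrow> nat set" where
  "Mv v I f = {i \<in> I. deg_v v (f i) = Max ((\<lambda>i'. deg_v v (f i')) ` I)}"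

definition Ov :: "nat \<Rightarrow> (nat \<Rightarrow> int ^ 'n) \<Rightarrow> real ^ 'n \<Rightarrow> nat set" where
  "Ov K a v = {i \<in> {1..K}. vdot v (a i) \<noteq> 0}"

definition cond_star :: "nat \<Rightarrow> (nat \<Rightarrow> int ^ 'n) \<Rightarrow> nat set \<Rightarrow> nat set
    \<Rightarrow> (nat \<Rightarrow> ('n, 'r::zero) lpoly) \<Rightarrow> bool" where
  "cond_star K a I J f = (\<forall>v::real ^ 'n. v \<noteq> 0 \<longrightarrow> (Ov K a v \<union> J) \<inter> Mv v I f \<noteq> {})"

definition in_module :: "nat \<Rightarrow> nat \<Rightarrow> (nat \<Rightarrow> nat \<Rightarrow> ('n::finite, 'r::comm_ring_1) lpoly)
    \<Rightarrow> (nat \<Rightarrow> ('n, 'r) lpoly) \<Rightarrow> bool" where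
  "in_module K m g f = (\<exists>c :: nat \<Rightarrow> ('n, 'r) lpoly.
      \<forall>k\<in>{1..K}. f k = (\<Sum>j\<in>{1..m}. c j * g j k))"

definition nonneg_nonzero :: "nat \<Rightarrow> (nat \<Rightarrow> ('n, 'r::{zero,ord}) lpoly) \<Rightarrow> bool" where
  "nonneg_nonzero K f = (\<forall>k\<in>{1..K}. f k \<noteq> 0 \<and> (\<forall>b. Poly_Mapping.lookup (f k) b \<ge> 0))"

end

theory Submission
  imports Defs
begin


definition lf :: "'v set \<Rightarrow> ('v \<Rightarrow> real) \<Rightarrow> ('v \<Rightarrow> real) \<Rightarrow> real" where
  "lf V L y = (\<Sum>v\<in>V. L v * y v)"

lemma approx_rat:
  assumes fV: "finite V" and fS: "finite S" and pos: "\<forall>L\<in>S. lf V L x > 0"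
  shows "\<exists>y. (\<forall>v\<in>V. y v \<in> \<rat>) \<and> (\<forall>L\<in>S. lf V L y > 0)"
proof (cases "S = {}")
  case True then show ?thesis by (intro exI[of _ "\<lambda>_. 0"]) auto
next
  case False
  define ep where "ep = Min ((\<lambda>L. lf V L x) ` S)"
  have eps: "ep > 0" using False fS pos unfolding ep_def by auto
  have epsle: "ep \<le> lf V L x" if "L \<in> S" for L unfolding ep_def using fS that by auto
  define M where "M = (\<Sum>L\<in>S. \<Sum>v\<in>V. \<bar>L v\<bar>)"
  have M0: "M \<ge> 0" unfolding M_def by (intro sum_nonneg) auto
  have hML: "(\<Sum>v\<in>V. \<bar>L v\<bar>) \<le> M" if "L \<in> S" for L
    unfolding M_def using fS that by (intro member_le_sum) (auto intro: sum_nonneg)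
  define dl where "dl = ep / (M + 1)"
  have d: "dl > 0" using eps M0 unfolding dl_def by auto
  have "\<forall>v. \<exists>q. q \<in> \<rat> \<and> x v < q \<and> q < x v + dl"
    using Rats_dense_in_real d by (metis less_add_same_cancel1)
  then obtain y where y: "\<And>v. y v \<in> \<rat> \<and> x v < y v \<and> y v < x v + dl" by metis
  have "lf V L y > 0" if L: "L \<in> S" for L
  proof -
    have "\<bar>lf V L y - lf V L x\<bar> = \<bar>\<Sum>v\<in>V. L v * (y v - x v)\<bar>"
      unfolding lf_def by (simp add: sum_subtractf right_diff_distrib)
    also have "\<dots> \<le> (\<Sum>v\<in>V. \<bar>L v * (y v - x v)\<bar>)" by (rule sum_abs)
    also have "\<dots> \<le> (\<Sum>v\<in>V. \<bar>L v\<bar> * dl)"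
    proof (intro sum_mono)
      fix v have "\<bar>y v - x v\<bar> \<le> dl" using y[of v] by auto
      then show "\<bar>L v * (y v - x v)\<bar> \<le> \<bar>L v\<bar> * dl" by (simp add: abs_mult mult_left_mono)
    qed
    also have "\<dots> = (\<Sum>v\<in>V. \<bar>L v\<bar>) * dl" by (simp add: sum_distrib_right)
    also have "\<dots> \<le> M * dl" using hML[OF L] d by (simp add: mult_right_mono)
    also have "\<dots> < ep"
    proof -
      have "M * dl = ep * (M / (M+1))" unfolding dl_def using M0 by (simp add: field_simps)
      also have "\<dots> < ep" using eps M0 by (simp add: mult_less_cancel_left1 field_simps)
      finally show ?thesis .
    qed
    finally show ?thesis using epsle[OF L] by linarith
  qed
  then show ?thesis using y by blast
qed

lemma rat_solution:
  assumes "finite V" "finite S" "\<forall>L\<in>E\<union>S. \<forall>v\<in>V. L v \<in> \<rat>"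
    "\<forall>L\<in>E. lf V L x = 0" "\<forall>L\<in>S. lf V L x > 0"
  shows "\<exists>y. (\<forall>v\<in>V. y v \<in> \<rat>) \<and> (\<forall>L\<in>E. lf V L y = 0) \<and> (\<forall>L\<in>S. lf V L y > 0)"
  using assms
proof (induction "card V" arbitrary: V E S x rule: less_induct)
  case less
  show ?case
  proof (cases "\<exists>L0\<in>E. \<exists>w\<in>V. L0 w \<noteq> 0")
    case False
    then have "\<forall>L\<in>E. lf V L y = 0" for y unfolding lf_def by auto
    then show ?thesis using approx_rat[OF less.prems(1,2,5)] by blast
  next
    case True
    then obtain L0 w where L0: "L0 \<in> E" and w: "w \<in> V" and nz: "L0 w \<noteq> 0" by blast
    define V' where "V' = V - {w}"
    define T where "T L = (\<lambda>v. L v - L w * L0 v / L0 w)" for L :: "_ \<Rightarrow> real"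
    define ext where "ext y = y(w := - (\<Sum>v\<in>V'. L0 v * y v) / L0 w)" for y :: "_ \<Rightarrow> real"
    have fV': "finite V'" using less.prems(1) unfolding V'_def by auto
    have cardlt: "card V' < card V" unfolding V'_def using w less.prems(1)
      by (meson card_Diff1_less)
    have key: "lf V L (ext y) = lf V' (T L) y" for L y
    proof -
      have "lf V L (ext y) = L w * ext y w + (\<Sum>v\<in>V'. L v * ext y v)"
        unfolding lf_def V'_def using w less.prems(1) by (simp add: sum.remove)
      also have "(\<Sum>v\<in>V'. L v * ext y v) = (\<Sum>v\<in>V'. L v * y v)"
        unfolding ext_def V'_def by (intro sum.cong) auto
      also have "L w * ext y w = - (L w / L0 w) * (\<Sum>v\<in>V'. L0 v * y v)"
        unfolding ext_def by simp
      also have "\<dots> = (\<Sum>v\<in>V'. - (L w * L0 v / L0 w) * y v)"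
        by (simp add: sum_distrib_left sum_negf field_simps)
      also have "(\<Sum>v\<in>V'. - (L w * L0 v / L0 w) * y v) + (\<Sum>v\<in>V'. L v * y v) = lf V' (T L) y"
        unfolding lf_def T_def by (subst sum.distrib[symmetric]) (rule sum.cong; simp add: algebra_simps)
      finally show ?thesis .
    qed
    have xext: "ext x = x"
    proof -
      have "0 = lf V L0 x" using less.prems(4) L0 by auto
      also have "\<dots> = L0 w * x w + (\<Sum>v\<in>V'. L0 v * x v)"
        unfolding lf_def V'_def using w less.prems(1) by (simp add: sum.remove)
      finally have "x w = - (\<Sum>v\<in>V'. L0 v * x v) / L0 w" using nz
        by (simp add: field_simps)
      then show ?thesis unfolding ext_def by auto
    qed
    have rat: "\<forall>L\<in>T ` E \<union> T ` S. \<forall>v\<in>V'. L v \<in> \<rat>"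
    proof (intro ballI)
      fix L' v assume "L' \<in> T ` E \<union> T ` S" "v \<in> V'"
      then obtain L where "L \<in> E \<union> S" "L' = T L" by auto
      moreover have "v \<in> V" using \<open>v \<in> V'\<close> unfolding V'_def by auto
      ultimately show "L' v \<in> \<rat>" using less.prems(3) L0 w unfolding T_def by auto
    qed
    have kx: "lf V' (T L) x = lf V L x" for L using key[of L x] unfolding xext by simp
    have hE: "\<forall>L\<in>T ` E. lf V' L x = 0" using less.prems(4) kx by auto
    have hS: "\<forall>L\<in>T ` S. lf V' L x > 0" using less.prems(5) kx by auto
    have fTS: "finite (T ` S)" using less.prems(2) by simp
    have "\<exists>y. (\<forall>v\<in>V'. y v \<in> \<rat>) \<and> (\<forall>L\<in>T ` E. lf V' L y = 0) \<and> (\<forall>L\<in>T ` S. lf V' L y > 0)"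
      by (rule less.hyps[OF cardlt fV' fTS rat hE hS])
    then obtain y where y: "\<forall>v\<in>V'. y v \<in> \<rat>" "\<forall>L\<in>T ` E. lf V' L y = 0"
      "\<forall>L\<in>T ` S. lf V' L y > 0" by blast
    have "\<forall>v\<in>V. ext y v \<in> \<rat>"
    proof
      fix v assume "v \<in> V"
      show "ext y v \<in> \<rat>"
      proof (cases "v = w")
        case True
        have "(\<Sum>v\<in>V'. L0 v * y v) \<in> \<rat>"
          using y(1) less.prems(3) L0 unfolding V'_def by (intro Rats_sum) auto
        then show ?thesis using True less.prems(3) L0 w unfolding ext_def
          by (auto intro: Rats_divide)
      next
        case False then show ?thesis using y(1) \<open>v \<in> V\<close> unfolding ext_def V'_def by auto
      qed
    qed
    then show ?thesis using y key by (intro exI[of _ "ext y"]) auto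
  qed
qed

lemma rat_scale:
  assumes "finite V" "\<forall>v\<in>V. y v \<in> \<rat>"
  shows "\<exists>D::int. D > 0 \<and> (\<forall>v\<in>V. real_of_int D * y v \<in> \<int>)"
  using assms
proof (induction V rule: finite_induct)
  case empty then show ?case by (intro exI[of _ 1]) auto
next
  case (insert u V)
  then obtain D where D: "D > 0" "\<forall>v\<in>V. real_of_int D * y v \<in> \<int>" by auto
  have "y u \<in> \<rat>" using insert by auto
  then obtain p q where pq: "q > 0" "y u = of_int p / of_int q" by (rule Rats_cases') blast
  have "real_of_int (D * q) * y v \<in> \<int>" if "v \<in> insert u V" for v
  proof (cases "v = u")
    case True then show ?thesis using pq by (simp add: field_simps)
  next
    case False
    then have "real_of_int D * y v \<in> \<int>" using D that by auto
    then have "real_of_int q * (real_of_int D * y v) \<in> \<int>" by (metis Ints_mult Ints_of_int)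
    moreover have "real_of_int (D * q) * y v = real_of_int q * (real_of_int D * y v)" by simp
    ultimately show ?thesis by (simp only: of_int_mult mult.commute mult.left_commute)
  qed
  then show ?case using D pq by (intro exI[of _ "D*q"]) auto
qed



lemma lookup_map_hom: "h 0 = 0 \<Longrightarrow> Poly_Mapping.lookup (Poly_Mapping.map h p) k = h (Poly_Mapping.lookup p k)"
  by (simp add: Poly_Mapping.map.rep_eq when_def)

lemma keys_mapR: "Poly_Mapping.keys (Poly_Mapping.map real_of_int p) = Poly_Mapping.keys p"
  by (auto simp: in_keys_iff lookup_map_hom)

lemma pm_expand: "p = (\<Sum>b\<in>Poly_Mapping.keys p. Poly_Mapping.single b (Poly_Mapping.lookup p b))"
proof (rule poly_mapping_eqI)
  fix k
  show "Poly_Mapping.lookup p k = Poly_Mapping.lookup (\<Sum>b\<in>Poly_Mapping.keys p. Poly_Mapping.single b (Poly_Mapping.lookup p b)) k"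
    by (simp add: lookup_sum lookup_single when_def in_keys_iff)
qed

lemma mapR_sum: "Poly_Mapping.map real_of_int (sum F A) = (\<Sum>x\<in>A. Poly_Mapping.map real_of_int (F x))"
  by (rule poly_mapping_eqI) (simp add: lookup_sum lookup_map_hom)

lemma mapR_mult:
  fixes p q :: "('a::comm_monoid_add) \<Rightarrow>\<^sub>0 int"
  shows "Poly_Mapping.map real_of_int (p * q) = Poly_Mapping.map real_of_int p * Poly_Mapping.map real_of_int q"
proof -
  let ?s = "\<lambda>p b. Poly_Mapping.single b (Poly_Mapping.lookup p b)"
  let ?r = "\<lambda>p b. Poly_Mapping.single b (real_of_int (Poly_Mapping.lookup p b))"
  have "p * q = (\<Sum>b\<in>Poly_Mapping.keys p. ?s p b) * (\<Sum>c\<in>Poly_Mapping.keys q. ?s q c)"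
    using pm_expand[of p] pm_expand[of q] by simp
  also have "\<dots> = (\<Sum>b\<in>Poly_Mapping.keys p. \<Sum>c\<in>Poly_Mapping.keys q.
       Poly_Mapping.single (b + c) (Poly_Mapping.lookup p b * Poly_Mapping.lookup q c))"
    by (simp add: sum_product mult_single)
  finally have 1: "Poly_Mapping.map real_of_int (p * q) = (\<Sum>b\<in>Poly_Mapping.keys p. \<Sum>c\<in>Poly_Mapping.keys q.
       Poly_Mapping.single (b + c) (real_of_int (Poly_Mapping.lookup p b) * real_of_int (Poly_Mapping.lookup q c)))"
    by (simp add: mapR_sum)
  have 2: "Poly_Mapping.map real_of_int p = (\<Sum>b\<in>Poly_Mapping.keys p. ?r p b)" for p :: "'a \<Rightarrow>\<^sub>0 int"
    by (subst pm_expand[of p]) (simp add: mapR_sum)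
  show ?thesis unfolding 1 2[of p] 2[of q] by (simp add: sum_product mult_single)
qed

lemma lookup_single_mult:
  fixes P :: "('a::comm_monoid_add) \<Rightarrow>\<^sub>0 real"
  shows "Poly_Mapping.lookup (Poly_Mapping.single b x * P) e = x * Poly_Mapping.lookup (Poly_Mapping.single b 1 * P) e"
proof -
  have "Poly_Mapping.single b x = Poly_Mapping.single 0 x * Poly_Mapping.single b 1"
    by (simp add: mult_single)
  then have "Poly_Mapping.single b x * P = Poly_Mapping.map ((*) x) (Poly_Mapping.single b 1 * P)"
    by (simp add: mult_map_scale_conv_mult mult.assoc)
  then show ?thesis by (simp add: lookup_map_hom)
qed

lemma combo:
  fixes G :: "nat \<Rightarrow> ('a::comm_monoid_add) \<Rightarrow>\<^sub>0 real"
  assumes "finite A" "\<And>j. finite (B j)"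
  shows "Poly_Mapping.lookup (\<Sum>j\<in>A. (\<Sum>b\<in>B j. Poly_Mapping.single b (w (j,b))) * G j) e
    = lf (Sigma A B) (\<lambda>v. Poly_Mapping.lookup (Poly_Mapping.single (snd v) 1 * G (fst v)) e) w"
proof -
  have "Poly_Mapping.lookup (\<Sum>j\<in>A. (\<Sum>b\<in>B j. Poly_Mapping.single b (w (j,b))) * G j) e
     = (\<Sum>j\<in>A. \<Sum>b\<in>B j. Poly_Mapping.lookup (Poly_Mapping.single b (w (j,b)) * G j) e)"
    by (simp only: sum_distrib_right lookup_sum)
  also have "\<dots> = (\<Sum>j\<in>A. \<Sum>b\<in>B j. w (j,b) * Poly_Mapping.lookup (Poly_Mapping.single b 1 * G j) e)"
    by (intro sum.cong refl lookup_single_mult)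
  also have "\<dots> = lf (Sigma A B) (\<lambda>v. Poly_Mapping.lookup (Poly_Mapping.single (snd v) 1 * G (fst v)) e) w"
    unfolding lf_def using assms by (subst sum.Sigma) (auto simp: mult.commute split_beta)
  finally show ?thesis .
qed

lemma deg_v_keys: "Poly_Mapping.keys p = Poly_Mapping.keys q \<Longrightarrow> deg_v v p = deg_v v q"
  unfolding deg_v_def by (metis keys_eq_empty)

lemma cond_star_cong:
  assumes "I \<subseteq> {1..K}" "\<forall>k\<in>{1..K}. Poly_Mapping.keys (F k) = Poly_Mapping.keys (G k)"
  shows "cond_star K a I J F \<longleftrightarrow> cond_star K a I J G"
proof -
  have d: "deg_v v (F i) = deg_v v (G i)" if "i \<in> I" for v i
    using assms that by (intro deg_v_keys) auto
  have "Mv v I F = Mv v I G" for v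
  proof -
    have "(\<lambda>i'. deg_v v (F i')) ` I = (\<lambda>i'. deg_v v (G i')) ` I" using d by (intro image_cong) auto
    then show ?thesis unfolding Mv_def using d by auto
  qed
  then show ?thesis unfolding cond_star_def by simp
qed



theorem mainTheorem8:
  fixes K m :: nat
    and g :: "nat \<Rightarrow> nat \<Rightarrow> ('n::finite, int) lpoly"
    and a :: "nat \<Rightarrow> int ^ 'n"
    and I J :: "nat set"
  assumes "I \<subseteq> {1..K}" and "J \<subseteq> {1..K}"
  shows "(\<exists>ft :: nat \<Rightarrow> ('n, int) lpoly.
            in_module K m g ft \<and> nonneg_nonzero K ft \<and> cond_star K a I J ft)
     \<longleftrightarrow> (\<exists>f :: nat \<Rightarrow> ('n, real) lpoly.
            in_module K m (\<lambda>j k. Poly_Mapping.map real_of_int (g j k)) f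
            \<and> nonneg_nonzero K f \<and> cond_star K a I J f)"
proof
  assume "\<exists>ft :: nat \<Rightarrow> ('n, int) lpoly.
            in_module K m g ft \<and> nonneg_nonzero K ft \<and> cond_star K a I J ft"
  then obtain ft :: "nat \<Rightarrow> ('n, int) lpoly" where
    mod: "in_module K m g ft" and nn: "nonneg_nonzero K ft" and cs: "cond_star K a I J ft" by blast
  from mod obtain c where c: "\<forall>k\<in>{1..K}. ft k = (\<Sum>j\<in>{1..m}. c j * g j k)"
    unfolding in_module_def by blast
  define f where "f k = Poly_Mapping.map real_of_int (ft k)" for k
  have "in_module K m (\<lambda>j k. Poly_Mapping.map real_of_int (g j k)) f"
    unfolding in_module_def f_def
    using c by (intro exI[of _ "\<lambda>j. Poly_Mapping.map real_of_int (c j)"]) (simp add: mapR_sum mapR_mult)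
  moreover have "nonneg_nonzero K f"
    unfolding nonneg_nonzero_def
  proof (intro ballI conjI allI)
    fix k assume k: "k \<in> {1..K}"
    have "Poly_Mapping.keys (f k) = Poly_Mapping.keys (ft k)" by (simp add: f_def keys_mapR)
    moreover have "ft k \<noteq> 0" using nn k unfolding nonneg_nonzero_def by blast
    ultimately show "f k \<noteq> 0" by (metis keys_eq_empty)
    fix b
    have "Poly_Mapping.lookup (ft k) b \<ge> 0" using nn k unfolding nonneg_nonzero_def by blast
    then show "Poly_Mapping.lookup (f k) b \<ge> 0" by (simp add: f_def lookup_map_hom)
  qed
  moreover have "cond_star K a I J f"
    using cs cond_star_cong[OF assms(1), of f ft] unfolding f_def by (simp add: keys_mapR)
  ultimately show "\<exists>f :: nat \<Rightarrow> ('n, real) lpoly.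
            in_module K m (\<lambda>j k. Poly_Mapping.map real_of_int (g j k)) f
            \<and> nonneg_nonzero K f \<and> cond_star K a I J f" by blast
next
  assume "\<exists>f :: nat \<Rightarrow> ('n, real) lpoly.
            in_module K m (\<lambda>j k. Poly_Mapping.map real_of_int (g j k)) f
            \<and> nonneg_nonzero K f \<and> cond_star K a I J f"
  then obtain f :: "nat \<Rightarrow> ('n, real) lpoly" where
    mod: "in_module K m (\<lambda>j k. Poly_Mapping.map real_of_int (g j k)) f"
    and nn: "nonneg_nonzero K f" and cs: "cond_star K a I J f" by blast
  define G where "G j k = Poly_Mapping.map real_of_int (g j k)" for j k
  from mod obtain c where c: "\<forall>k\<in>{1..K}. f k = (\<Sum>j\<in>{1..m}. c j * G j k)"
    unfolding in_module_def G_def by blast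
  define V where "V = Sigma {1..m} (\<lambda>j. Poly_Mapping.keys (c j))"
  define x where "x v = Poly_Mapping.lookup (c (fst v)) (snd v)" for v
  define Lf where "Lf k e = (\<lambda>v. Poly_Mapping.lookup (Poly_Mapping.single (snd v) 1 * G (fst v) k) e)" for k e
  define E where "E = {Lf k e | k e. k \<in> {1..K} \<and> Poly_Mapping.lookup (f k) e = 0}"
  define S where "S = (\<lambda>(k,e). Lf k e) ` Sigma {1..K} (\<lambda>k. Poly_Mapping.keys (f k))"
  have fV: "finite V" unfolding V_def by auto
  have fS: "finite S" unfolding S_def by auto
  have cmb: "Poly_Mapping.lookup (\<Sum>j\<in>{1..m}. (\<Sum>b\<in>Poly_Mapping.keys (c j). Poly_Mapping.single b (w (j,b))) * G j k) e
     = lf V (Lf k e) w" for w k e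
    unfolding V_def Lf_def by (rule combo) auto
  have fx: "Poly_Mapping.lookup (f k) e = lf V (Lf k e) x" if "k \<in> {1..K}" for k e
  proof -
    have ce: "(\<Sum>b\<in>Poly_Mapping.keys (c j). Poly_Mapping.single b (x (j,b))) = c j" for j
      unfolding x_def using pm_expand[of "c j"] by simp
    have "f k = (\<Sum>j\<in>{1..m}. c j * G j k)" using c that by blast
    also have "\<dots> = (\<Sum>j\<in>{1..m}. (\<Sum>b\<in>Poly_Mapping.keys (c j). Poly_Mapping.single b (x (j,b))) * G j k)"
      by (rule sum.cong[OF refl]) (simp only: ce)
    finally have "f k = (\<Sum>j\<in>{1..m}. (\<Sum>b\<in>Poly_Mapping.keys (c j). Poly_Mapping.single b (x (j,b))) * G j k)" .
    then show ?thesis using cmb by simp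
  qed
  have rat: "\<forall>L\<in>E \<union> S. \<forall>v\<in>V. L v \<in> \<rat>"
  proof -
    have "Lf k e v \<in> \<rat>" for k e v
    proof -
      have "Lf k e v = Poly_Mapping.lookup (Poly_Mapping.map real_of_int
          (Poly_Mapping.single (snd v) 1 * g (fst v) k)) e"
        unfolding Lf_def G_def by (simp add: mapR_mult)
      also have "\<dots> = real_of_int (Poly_Mapping.lookup (Poly_Mapping.single (snd v) 1 * g (fst v) k) e)"
        by (simp add: lookup_map_hom)
      finally show ?thesis by (simp add: Rats_of_int)
    qed
    then show ?thesis unfolding E_def S_def by auto
  qed
  have Ex: "\<forall>L\<in>E. lf V L x = 0" unfolding E_def using fx by auto
  have Sx: "\<forall>L\<in>S. lf V L x > 0"
  proof
    fix L assume "L \<in> S"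
    then obtain k e where k: "k \<in> {1..K}" and e: "e \<in> Poly_Mapping.keys (f k)" and L: "L = Lf k e"
      unfolding S_def by auto
    have "Poly_Mapping.lookup (f k) e \<ge> 0" using nn k unfolding nonneg_nonzero_def by auto
    moreover have "Poly_Mapping.lookup (f k) e \<noteq> 0" using e by (simp add: in_keys_iff)
    ultimately show "lf V L x > 0" using fx[OF k] L by simp
  qed
  obtain y where y: "\<forall>v\<in>V. y v \<in> \<rat>" "\<forall>L\<in>E. lf V L y = 0" "\<forall>L\<in>S. lf V L y > 0"
    using rat_solution[OF fV fS rat Ex Sx] by blast
  obtain D :: int where D: "D > 0" "\<forall>v\<in>V. real_of_int D * y v \<in> \<int>"
    using rat_scale[OF fV y(1)] by blast
  have zex: "\<forall>v\<in>V. \<exists>z::int. real_of_int z = real_of_int D * y v" using D(2) by (auto elim!: Ints_cases)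
  obtain z :: "_ \<Rightarrow> int" where z: "\<forall>v\<in>V. real_of_int (z v) = real_of_int D * y v"
    using bchoice[OF zex] by blast
  define ct where "ct j = (\<Sum>b\<in>Poly_Mapping.keys (c j). Poly_Mapping.single b (z (j,b)))" for j
  define ft where "ft k = (\<Sum>j\<in>{1..m}. ct j * g j k)" for k
  have lzD: "lf V L (\<lambda>v. real_of_int (z v)) = real_of_int D * lf V L y" for L
    unfolding lf_def sum_distrib_left using z by (intro sum.cong) auto
  have ftl: "real_of_int (Poly_Mapping.lookup (ft k) e) = real_of_int D * lf V (Lf k e) y" for k e
  proof -
    have "Poly_Mapping.map real_of_int (ft k) =
        (\<Sum>j\<in>{1..m}. (\<Sum>b\<in>Poly_Mapping.keys (c j). Poly_Mapping.single b (real_of_int (z (j,b)))) * G j k)"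
      unfolding ft_def ct_def G_def by (simp add: mapR_sum mapR_mult)
    note eq = this
    have "real_of_int (Poly_Mapping.lookup (ft k) e) = Poly_Mapping.lookup (Poly_Mapping.map real_of_int (ft k)) e"
      by (simp add: lookup_map_hom)
    also have "\<dots> = lf V (Lf k e) (\<lambda>v. real_of_int (z v))"
      unfolding eq by (rule cmb)
    finally have "real_of_int (Poly_Mapping.lookup (ft k) e) = lf V (Lf k e) (\<lambda>v. real_of_int (z v))" .
    then show ?thesis using lzD by simp
  qed
  have sign: "Poly_Mapping.lookup (ft k) e \<ge> 0 \<and> (Poly_Mapping.lookup (ft k) e \<noteq> 0 \<longleftrightarrow> Poly_Mapping.lookup (f k) e \<noteq> 0)"
    if k: "k \<in> {1..K}" for k e
  proof (cases "Poly_Mapping.lookup (f k) e = 0")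
    case True
    then have "Lf k e \<in> E" unfolding E_def using k by auto
    then have "real_of_int (Poly_Mapping.lookup (ft k) e) = 0" using ftl y(2) by simp
    then show ?thesis using True by simp
  next
    case False
    then have "Lf k e \<in> S" unfolding S_def using k by (auto simp: in_keys_iff)
    then have "real_of_int (Poly_Mapping.lookup (ft k) e) > 0" using ftl y(3) D(1) by simp
    then show ?thesis using False by simp
  qed
  have keq: "\<forall>k\<in>{1..K}. Poly_Mapping.keys (ft k) = Poly_Mapping.keys (f k)"
    using sign by (auto simp: in_keys_iff)
  have "in_module K m g ft" unfolding in_module_def ft_def by blast
  moreover have "nonneg_nonzero K ft"
    unfolding nonneg_nonzero_def
  proof (intro ballI conjI allI)
    fix k assume k: "k \<in> {1..K}"
    have "f k \<noteq> 0" using nn k unfolding nonneg_nonzero_def by blast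
    then show "ft k \<noteq> 0" using keq k by (metis keys_eq_empty)
    fix b show "Poly_Mapping.lookup (ft k) b \<ge> 0" using sign k by blast
  qed
  moreover have "cond_star K a I J ft" using cs cond_star_cong[OF assms(1) keq] by simp
  ultimately show "\<exists>ft :: nat \<Rightarrow> ('n, int) lpoly.
            in_module K m g ft \<and> nonneg_nonzero K ft \<and> cond_star K a I J ft" by blast
qed

end
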